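(* Consider any instance of the splittable capacitated arc routing problem (SCARP) as defined in the context, with robot index set $\mathcal{R}$, and suppose it admits an optimal solution. Then there exists an optimal solution $(x,y)$ such that $|R_{2+}(y)| < m := |\mathcal{U}|$; that is, fewer than $m$ robots spray two or more edges, and every other robot $r\in\mathcal{R}$ either sprays nothing ($S_r(y)=\emptyset$) or sprays exactly one edge ($|S_r(y)|=1$).
   Context: SCARP (basic formulation). Let $\mathcal{G}=(\mathcal{V},\mathcal{U})$ be an undirected connected graph with vertex set $\mathcal{V}=\{1,\dots,n\}$, vertex $1$ being the depot. $\mathcal{U}$ is the set of undirected edges, written as pairs $(i,j)$ with $i<j$, and $\mathcal{E}=\{(i,j),(j,i):(i,j)\in\mathcal{U}\}$ is the set of directed arcs. Each edge $(i,j)\in\mathcal{U}$ has a cost $C_{ij}\ge 0$ and a demand $D_{ij}\ge 0$; $P>0$ is the robot capacity; $\mathcal{R}$ is a finite set of robots (robot tours). Decision variables: $x^r_{ij}\in\{0,1\}$ for $(i,j)\in\mathcal{E}$, $r\in\mathcal{R}$ (robot $r$ traverses arc $(i,j)$), and $y^r_{ij}\ge 0$ for $(i,j)\in\mathcal{U}$, $r\in\mathcal{R}$ (amount sprayed by $r$ on edge $(i,j)$; $y^r_{ij}=0$ if $D_{ij}=0$). The problem is: minimize $\sum_{r\in\mathcal{R}}\sum_{(i,j)\in\mathcal{U}} C_{ij}(x^r_{ij}+x^r_{ji})$ subject to: (i) $\sum_{(i,j)\in\mathcal{U}} y^r_{ij}\le P$ for all $r$; (ii) $\sum_{r\in\mathcal{R}}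 y^r_{ij}=D_{ij}$ for all $(i,j)\in\mathcal{U}$; (iii) $y^r_{ij}\le P(x^r_{ij}+x^r_{ji})$ for all $(i,j)\in\mathcal{U}$, $r$; (iv) flow conservation $\sum_{i:(i,k)\in\mathcal{E}} x^r_{ik}=\sum_{j:(k,j)\in\mathcal{E}} x^r_{kj}$ for all $k\in\mathcal{V}$, $r$; (v) connectivity: for every $\mathcal{S}\subset\mathcal{V}$ with $1\in\mathcal{S}$, $\mathcal{T}=\mathcal{V}\setminus\mathcal{S}$, and every $r$, $\sum_{i\in\mathcal{S},j\in\mathcal{T},(i,j)\in\mathcal{E}} P\,x^r_{ij}\ge \sum_{(i,j)\in\mathcal{U},\,i,j\in\mathcal{T}} y^r_{ij}$. A solution is a pair $(x,y)$ satisfying all constraints; it is optimal if it minimizes the objective. Support: for a solution $y$ and robot $r$, $S_r(y)=\{(i,j)\in\mathcal{U}: y^r_{ij}>0\}$, and $R_{2+}(y)=\{r\in\mathcal{R}: |S_r(y)|\ge 2\}$. *)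

theory Defs
  imports Complex_Main
begin

text \<open>SCARP instance data: vertices V = {1..n}, depot 1, undirected edges U given as
  pairs (i,j) with i < j, costs C, demands D (indexed by edges), capacity P, robot set R.
  Decision variables: x r (i,j) (traversal indicator for arc (i,j), values 0 or 1) and
  y r (i,j) (amount sprayed by robot r on edge (i,j)).\<close>

definition scarp_vertices :: "nat \<Rightarrow> nat set" where
  "scarp_vertices n = {1..n}"

definition scarp_arcs :: "(nat \<times> nat) set \<Rightarrow> (nat \<times> nat) set" where
  "scarp_arcs U = U \<union> {(j, i) | i j. (i, j) \<in> U}"

definition scarp_instance ::
  "nat \<Rightarrow> (nat \<times> nat) set \<Rightarrow> (nat \<times> nat \<Rightarrow> real) \<Rightarrow> (nat \<times> nat \<Rightarrow> real) \<Rightarrow> real \<Rightarrow> 'r set \<Rightarrow> bool"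
  where
  "scarp_instance n U C D P R \<longleftrightarrow>
     1 \<le> n \<and>
     U \<subseteq> {(i, j). i \<in> scarp_vertices n \<and> j \<in> scarp_vertices n \<and> i < j} \<and>
     (\<forall>v \<in> scarp_vertices n. (1, v) \<in> (scarp_arcs U)\<^sup>*) \<and>
     (\<forall>e \<in> U. C e \<ge> 0 \<and> D e \<ge> 0) \<and>
     P > 0 \<and> finite R"

definition scarp_objective ::
  "(nat \<times> nat) set \<Rightarrow> (nat \<times> nat \<Rightarrow> real) \<Rightarrow> 'r set \<Rightarrow> ('r \<Rightarrow> nat \<times> nat \<Rightarrow> real) \<Rightarrow> real" where
  "scarp_objective U C R x = (\<Sum>r\<in>R. \<Sum>(i, j)\<in>U. C (i, j) * (x r (i, j) + x r (j, i)))"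

definition scarp_feasible ::
  "nat \<Rightarrow> (nat \<times> nat) set \<Rightarrow> (nat \<times> nat \<Rightarrow> real) \<Rightarrow> real \<Rightarrow> 'r set
    \<Rightarrow> ('r \<Rightarrow> nat \<times> nat \<Rightarrow> real) \<Rightarrow> ('r \<Rightarrow> nat \<times> nat \<Rightarrow> real) \<Rightarrow> bool" where
  "scarp_feasible n U D P R x y \<longleftrightarrow>
     \<comment> \<open>variable domains\<close>
     (\<forall>r\<in>R. \<forall>a\<in>scarp_arcs U. x r a \<in> {0, 1}) \<and>
     (\<forall>r\<in>R. \<forall>e\<in>U. y r e \<ge> 0 \<and> (D e = 0 \<longrightarrow> y r e = 0)) \<and>
     \<comment> \<open>(i) capacity\<close>
     (\<forall>r\<in>R. (\<Sum>e\<in>U. y r e) \<le> P) \<and>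
     \<comment> \<open>(ii) demand satisfaction\<close>
     (\<forall>e\<in>U. (\<Sum>r\<in>R. y r e) = D e) \<and>
     \<comment> \<open>(iii) spraying only on traversed edges\<close>
     (\<forall>r\<in>R. \<forall>(i, j)\<in>U. y r (i, j) \<le> P * (x r (i, j) + x r (j, i))) \<and>
     \<comment> \<open>(iv) flow conservation\<close>
     (\<forall>r\<in>R. \<forall>k\<in>scarp_vertices n.
        (\<Sum>(i, k')\<in>{a \<in> scarp_arcs U. snd a = k}. x r (i, k')) =
        (\<Sum>(k', j)\<in>{a \<in> scarp_arcs U. fst a = k}. x r (k', j))) \<and>
     \<comment> \<open>(v) connectivity\<close>
     (\<forall>r\<in>R. \<forall>S. S \<subseteq> scarp_vertices n \<and> 1 \<in> S \<longrightarrow>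
        (let T = scarp_vertices n - S in
          (\<Sum>(i, j)\<in>{(i, j) \<in> scarp_arcs U. i \<in> S \<and> j \<in> T}. P * x r (i, j)) \<ge>
          (\<Sum>(i, j)\<in>{(i, j) \<in> U. i \<in> T \<and> j \<in> T}. y r (i, j))))"

definition scarp_optimal ::
  "nat \<Rightarrow> (nat \<times> nat) set \<Rightarrow> (nat \<times> nat \<Rightarrow> real) \<Rightarrow> (nat \<times> nat \<Rightarrow> real) \<Rightarrow> real \<Rightarrow> 'r set
    \<Rightarrow> ('r \<Rightarrow> nat \<times> nat \<Rightarrow> real) \<Rightarrow> ('r \<Rightarrow> nat \<times> nat \<Rightarrow> real) \<Rightarrow> bool" where
  "scarp_optimal n U C D P R x y \<longleftrightarrow>
     scarp_feasible n U D P R x y \<and>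
     (\<forall>x' y'. scarp_feasible n U D P R x' y' \<longrightarrow>
        scarp_objective U C R x \<le> scarp_objective U C R x')"

definition spray_support :: "(nat \<times> nat) set \<Rightarrow> ('r \<Rightarrow> nat \<times> nat \<Rightarrow> real) \<Rightarrow> 'r \<Rightarrow> (nat \<times> nat) set" where
  "spray_support U y r = {e \<in> U. y r e > 0}"

definition R2plus :: "(nat \<times> nat) set \<Rightarrow> 'r set \<Rightarrow> ('r \<Rightarrow> nat \<times> nat \<Rightarrow> real) \<Rightarrow> 'r set" where
  "R2plus U R y = {r \<in> R. card (spray_support U y r) \<ge> 2}"

end

theory Submission
  imports Defs "HOL-Library.Function_Algebras"
begin

interpretation fv: vector_space "(\<lambda>c f x. c * f x) :: real \<Rightarrow> ('a \<Rightarrow> real) \<Rightarrow> ('a \<Rightarrow> real)"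
  by unfold_locales (auto simp: fun_eq_iff plus_fun_def algebra_simps)

lemma sum_fun_app: "(\<Sum>v\<in>A. g v) z = (\<Sum>v\<in>A. (g v z :: real))"
  by (induct A rule: infinite_finite_induct) (auto simp: plus_fun_def zero_fun_def)

definition ind :: "'a \<Rightarrow> 'a \<Rightarrow> real" where "ind z = (\<lambda>w. if w = z then 1 else 0)"
definition vc :: "'r \<times> 'e \<Rightarrow> ('r + 'e) \<Rightarrow> real" where
  "vc p = ind (Inl (fst p)) - ind (Inr (snd p))"

lemma vc_inj: "inj vc"
proof (rule injI)
  fix p q :: "'r \<times> 'e" assume "vc p = vc q"
  then have a: "vc p (Inl (fst p)) = vc q (Inl (fst p))" and b: "vc p (Inr (snd p)) = vc q (Inr (snd p))"
    by auto
  from a have "fst p = fst q" by (auto simp: vc_def ind_def split: if_splits)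
  moreover from b have "snd p = snd q" by (auto simp: vc_def ind_def split: if_splits)
  ultimately show "p = q" by (simp add: prod_eq_iff)
qed

lemma row_conv:
  assumes "finite S" "S \<subseteq> R \<times> U" "\<And>p. lam p \<noteq> 0 \<Longrightarrow> p \<in> S" "r \<in> R" "finite U"
  shows "(\<Sum>e\<in>U. lam (r, e)) = (\<Sum>p\<in>S. if fst p = r then lam p else (0::real))"
proof -
  have "{r} \<times> U = Pair r ` U" by auto
  then have "(\<Sum>e\<in>U. lam (r, e)) = (\<Sum>p\<in>{r} \<times> U. lam p)"
    by (simp add: sum.reindex inj_on_def)
  also have "\<dots> = (\<Sum>p\<in>{p\<in>S. fst p = r}. lam p)"
    apply (rule sum.mono_neutral_cong) using assms by auto
  also have "\<dots> = (\<Sum>p\<in>S. if fst p = r then lam p else 0)"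
    using assms(1) by (rule sum.inter_filter)
  finally show ?thesis .
qed

lemma col_conv:
  assumes "finite S" "S \<subseteq> R \<times> U" "\<And>p. lam p \<noteq> 0 \<Longrightarrow> p \<in> S" "e \<in> U" "finite R"
  shows "(\<Sum>r\<in>R. lam (r, e)) = (\<Sum>p\<in>S. if snd p = e then lam p else (0::real))"
proof -
  have "R \<times> {e} = (\<lambda>r. (r, e)) ` R" by auto
  then have "(\<Sum>r\<in>R. lam (r, e)) = (\<Sum>p\<in>R \<times> {e}. lam p)"
    by (simp add: sum.reindex inj_on_def)
  also have "\<dots> = (\<Sum>p\<in>{p\<in>S. snd p = e}. lam p)"
    apply (rule sum.mono_neutral_cong) using assms by auto
  also have "\<dots> = (\<Sum>p\<in>S. if snd p = e then lam p else 0)"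
    using assms(1) by (rule sum.inter_filter)
  finally show ?thesis .
qed

lemma rank_bound:
  fixes S :: "('r \<times> 'e) set"
  assumes fR: "finite R" and fU: "finite U" and SRU: "S \<subseteq> R \<times> U" and Sne: "S \<noteq> {}"
    and nocirc: "\<And>lam. (\<forall>p. lam p \<noteq> 0 \<longrightarrow> p \<in> S) \<Longrightarrow> (\<forall>r\<in>R. (\<Sum>e\<in>U. lam (r, e)) = 0)
        \<Longrightarrow> (\<forall>e\<in>U. (\<Sum>r\<in>R. lam (r, e)) = 0) \<Longrightarrow> (\<forall>p. lam p = (0::real))"
  shows "card S + 1 \<le> card (fst ` S) + card (snd ` S)"
proof -
  have fS: "finite S" using fR fU SRU finite_SigmaI finite_subset by blast
  define Act where "Act = Inl ` fst ` S \<union> Inr ` snd ` S"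
  have fA: "finite Act" using fS by (simp add: Act_def)
  have cA: "card Act = card (fst ` S) + card (snd ` S)"
    unfolding Act_def
    by (subst card_Un_disjoint) (auto simp: fS card_image inj_on_def)
  obtain z0 where z0: "z0 \<in> Act" using Sne unfolding Act_def by auto
  define B where "B = (\<lambda>z. ind z - ind z0) ` (Act - {z0})"
  have fB: "finite B" using fA by (simp add: B_def)
  have cB: "card B \<le> card Act - 1"
    unfolding B_def using card_image_le[of "Act - {z0}"] fA z0 by (simp add: card_Diff_singleton)
  have gen: "ind z - ind z0 \<in> fv.span B" if "z \<in> Act" for z
  proof (cases "z = z0")
    case True then show ?thesis using fv.span_zero by simp
  next
    case False then show ?thesis using that by (intro fv.span_base) (auto simp: B_def)
  qed
  have span: "vc ` S \<subseteq> fv.span B"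
  proof
    fix v assume "v \<in> vc ` S"
    then obtain r e where re: "(r, e) \<in> S" "v = vc (r, e)" by auto
    have "v = (ind (Inl r) - ind z0) - (ind (Inr e) - ind z0)"
      using re by (simp add: vc_def)
    moreover have "Inl r \<in> Act" "Inr e \<in> Act" using re by (force simp: Act_def)+
    ultimately show "v \<in> fv.span B" using gen fv.span_diff by metis
  qed
  have indep: "fv.independent (vc ` S)"
  proof (rule fv.independent_if_scalars_zero)
    show "finite (vc ` S)" using fS by simp
  next
    fix f :: "(('r + 'e) \<Rightarrow> real) \<Rightarrow> real" and v
    assume sum0: "(\<Sum>x\<in>vc ` S. (\<lambda>xa. f x * x xa)) = 0" and v: "v \<in> vc ` S"
    define lam where "lam p = (if p \<in> S then f (vc p) else 0)" for p
    have sum0': "(\<Sum>p\<in>S. (\<lambda>w. lam p * vc p w)) = 0"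
    proof -
      have "(\<Sum>x\<in>vc ` S. (\<lambda>xa. f x * x xa)) = (\<Sum>p\<in>S. (\<lambda>xa. f (vc p) * vc p xa))"
        by (subst sum.reindex) (auto intro: inj_on_subset[OF vc_inj])
      also have "\<dots> = (\<Sum>p\<in>S. (\<lambda>w. lam p * vc p w))"
        by (rule sum.cong) (auto simp: lam_def)
      finally show ?thesis using sum0 by simp
    qed
    have supp: "\<forall>p. lam p \<noteq> 0 \<longrightarrow> p \<in> S" by (auto simp: lam_def)
    have rows: "\<forall>r\<in>R. (\<Sum>e\<in>U. lam (r, e)) = 0"
    proof
      fix r assume r: "r \<in> R"
      have "(\<Sum>e\<in>U. lam (r, e)) = (\<Sum>p\<in>S. if fst p = r then lam p else 0)"
        using row_conv[OF fS SRU _ r fU] supp by blast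
      also have "\<dots> = (\<Sum>p\<in>S. lam p * vc p (Inl r))"
        by (rule sum.cong) (auto simp: vc_def ind_def)
      also have "\<dots> = (\<Sum>p\<in>S. (\<lambda>w. lam p * vc p w)) (Inl r)"
        by (simp add: sum_fun_app)
      also have "\<dots> = 0" using sum0' by simp
      finally show "(\<Sum>e\<in>U. lam (r, e)) = 0" .
    qed
    have cols: "\<forall>e\<in>U. (\<Sum>r\<in>R. lam (r, e)) = 0"
    proof
      fix e assume e: "e \<in> U"
      have "(\<Sum>r\<in>R. lam (r, e)) = (\<Sum>p\<in>S. if snd p = e then lam p else 0)"
        using col_conv[OF fS SRU _ e fR] supp by blast
      also have "\<dots> = - (\<Sum>p\<in>S. lam p * vc p (Inr e))"
        by (subst sum_negf[symmetric], rule sum.cong) (auto simp: vc_def ind_def)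
      also have "\<dots> = - (\<Sum>p\<in>S. (\<lambda>w. lam p * vc p w)) (Inr e)"
        by (simp add: sum_fun_app)
      also have "\<dots> = 0" using sum0' by simp
      finally show "(\<Sum>r\<in>R. lam (r, e)) = 0" .
    qed
    have "\<forall>p. lam p = 0" using nocirc[OF supp rows cols] .
    then show "f v = 0" using v by (metis lam_def imageE)
  qed
  have "card (vc ` S) \<le> card B" using fv.independent_span_bound[OF fB indep span] by simp
  moreover have "card (vc ` S) = card S" using inj_on_subset[OF vc_inj, of S] by (simp add: card_image)
  moreover have "card Act \<ge> 1" using fA z0 by (metis One_nat_def Suc_leI card_gt_0_iff empty_iff)
  ultimately show ?thesis using cA cB by linarith
qed

lemma count_bound:
  fixes S :: "('r \<times> 'e) set"
  assumes fR: "finite R" and fU: "finite U" and SRU: "S \<subseteq> R \<times> U" and Une: "U \<noteq> {}"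
    and nocirc: "\<And>lam. (\<forall>p. lam p \<noteq> 0 \<longrightarrow> p \<in> S) \<Longrightarrow> (\<forall>r\<in>R. (\<Sum>e\<in>U. lam (r, e)) = 0)
        \<Longrightarrow> (\<forall>e\<in>U. (\<Sum>r\<in>R. lam (r, e)) = 0) \<Longrightarrow> (\<forall>p. lam p = (0::real))"
  shows "card {r\<in>R. card {e\<in>U. (r, e) \<in> S} \<ge> 2} < card U"
proof (cases "S = {}")
  case True
  then show ?thesis using fU Une by (simp add: card_gt_0_iff)
next
  case False
  have fS: "finite S" using fR fU SRU finite_SigmaI finite_subset by blast
  define A where "A = fst ` S"
  define g where "g r = card {e\<in>U. (r, e) \<in> S}" for r
  define K where "K = {r\<in>R. g r \<ge> 2}"
  have KA: "K \<subseteq> A"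
  proof
    fix r assume "r \<in> K"
    then have "g r \<ge> 2" by (simp add: K_def)
    then have "{e\<in>U. (r, e) \<in> S} \<noteq> {}" unfolding g_def by (metis card.empty not_numeral_le_zero)
    then show "r \<in> A" by (force simp: A_def)
  qed
  have fA: "finite A" using fS by (simp add: A_def)
  have g1: "g r \<ge> 1" if "r \<in> A" for r
  proof -
    from that obtain e where "(r, e) \<in> S" by (auto simp: A_def)
    then have ne: "{e\<in>U. (r, e) \<in> S} \<noteq> {}" using SRU by auto
    have "finite {e\<in>U. (r, e) \<in> S}" using fU by simp
    then show ?thesis using ne unfolding g_def by (simp add: Suc_le_eq card_gt_0_iff)
  qed
  have Seq: "S = Sigma A (\<lambda>r. {e\<in>U. (r, e) \<in> S})" using SRU by (force simp: A_def)
  have cS: "card S = (\<Sum>r\<in>A. g r)"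
    by (subst Seq) (use fA fU in \<open>simp add: card_SigmaI g_def\<close>)
  also have "\<dots> = (\<Sum>r\<in>K. g r) + (\<Sum>r\<in>A - K. g r)"
    using fA KA by (metis add.commute sum.subset_diff)
  also have "\<dots> \<ge> (\<Sum>r\<in>K. 2) + (\<Sum>r\<in>A - K. 1)"
    apply (intro add_mono sum_mono) using g1 by (auto simp: K_def)
  finally have "card S \<ge> 2 * card K + card (A - K)" by simp
  moreover have "card (A - K) = card A - card K" using KA fA by (simp add: card_Diff_subset finite_subset)
  moreover have "card K \<le> card A" using KA fA by (simp add: card_mono)
  moreover have "card (snd ` S) \<le> card U" using SRU fU by (intro card_mono) auto
  moreover have "card S + 1 \<le> card A + card (snd ` S)"
    unfolding A_def by (rule rank_bound[OF fR fU SRU False nocirc])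
  ultimately have "card K < card U" by linarith
  then show ?thesis by (simp add: K_def g_def)
qed

lemma arcs_fin: "finite U \<Longrightarrow> finite (scarp_arcs U)"
proof -
  assume "finite U"
  moreover have "scarp_arcs U = U \<union> prod.swap ` U" by (auto simp: scarp_arcs_def)
  ultimately show ?thesis by simp
qed

lemma arcs_mem: "(i, j) \<in> U \<Longrightarrow> (i, j) \<in> scarp_arcs U \<and> (j, i) \<in> scarp_arcs U"
  by (auto simp: scarp_arcs_def)

lemma feas_transfer:
  assumes feas: "scarp_feasible n U D P R x y" and fU: "finite U" and P: "P > 0"
    and nn: "\<And>r e. r \<in> R \<Longrightarrow> e \<in> U \<Longrightarrow> y' r e \<ge> 0"
    and sub: "\<And>r e. r \<in> R \<Longrightarrow> e \<in> U \<Longrightarrow> y' r e > 0 \<Longrightarrow> y r e > 0"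
    and rows: "\<And>r. r \<in> R \<Longrightarrow> (\<Sum>e\<in>U. y' r e) = (\<Sum>e\<in>U. y r e)"
    and cols: "\<And>e. e \<in> U \<Longrightarrow> (\<Sum>r\<in>R. y' r e) = (\<Sum>r\<in>R. y r e)"
  shows "scarp_feasible n U D P R x y'"
proof -
  note F = feas[unfolded scarp_feasible_def]
  have xdom: "\<forall>r\<in>R. \<forall>a\<in>scarp_arcs U. x r a \<in> {0, 1}" by (rule F[THEN conjunct1])
  have ydom: "\<forall>r\<in>R. \<forall>e\<in>U. y r e \<ge> 0 \<and> (D e = 0 \<longrightarrow> y r e = 0)" by (rule F[THEN conjunct2, THEN conjunct1])
  have cap: "\<forall>r\<in>R. (\<Sum>e\<in>U. y r e) \<le> P" by (rule F[THEN conjunct2, THEN conjunct2, THEN conjunct1])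
  have dem: "\<forall>e\<in>U. (\<Sum>r\<in>R. y r e) = D e" by (rule F[THEN conjunct2, THEN conjunct2, THEN conjunct2, THEN conjunct1])
  have iii: "\<forall>r\<in>R. \<forall>(i, j)\<in>U. y r (i, j) \<le> P * (x r (i, j) + x r (j, i))" by (rule F[THEN conjunct2, THEN conjunct2, THEN conjunct2, THEN conjunct2, THEN conjunct1])
  have iv: "\<forall>r\<in>R. \<forall>k\<in>scarp_vertices n.
        (\<Sum>(i, k')\<in>{a \<in> scarp_arcs U. snd a = k}. x r (i, k')) =
        (\<Sum>(k', j)\<in>{a \<in> scarp_arcs U. fst a = k}. x r (k', j))" by (rule F[THEN conjunct2, THEN conjunct2, THEN conjunct2, THEN conjunct2, THEN conjunct2, THEN conjunct1])
  have v: "\<forall>r\<in>R. \<forall>S. S \<subseteq> scarp_vertices n \<and> 1 \<in> S \<longrightarrow>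
        (let T = scarp_vertices n - S in
          (\<Sum>(i, j)\<in>{(i, j) \<in> scarp_arcs U. i \<in> S \<and> j \<in> T}. P * x r (i, j)) \<ge>
          (\<Sum>(i, j)\<in>{(i, j) \<in> U. i \<in> T \<and> j \<in> T}. y r (i, j)))" by (rule F[THEN conjunct2, THEN conjunct2, THEN conjunct2, THEN conjunct2, THEN conjunct2, THEN conjunct2])
  have xnn: "x r a \<ge> 0" if "r \<in> R" "a \<in> scarp_arcs U" for r a
  proof -
    have "x r a \<in> {0, 1}" using xdom that by blast
    then show ?thesis by auto
  qed
  have cap': "(\<Sum>e\<in>U. y' r e) \<le> P" if "r \<in> R" for r using cap rows that by simp
  have leP: "y' r e \<le> P" if "r \<in> R" "e \<in> U" for r e
  proof -
    have "y' r e \<le> (\<Sum>e\<in>U. y' r e)" by (rule member_le_sum) (use that nn fU in auto)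
    then show ?thesis using cap'[OF that(1)] by linarith
  qed
  have y'dom: "\<forall>r\<in>R. \<forall>e\<in>U. y' r e \<ge> 0 \<and> (D e = 0 \<longrightarrow> y' r e = 0)"
  proof (intro ballI conjI impI)
    fix r e assume r: "r \<in> R" and e: "e \<in> U"
    show "y' r e \<ge> 0" using nn r e .
    assume "D e = 0"
    then have "y r e = 0" using ydom r e by blast
    then have "\<not> y' r e > 0" using sub r e by fastforce
    then show "y' r e = 0" using nn[OF r e] by linarith
  qed
  have iii': "\<forall>r\<in>R. \<forall>(i, j)\<in>U. y' r (i, j) \<le> P * (x r (i, j) + x r (j, i))"
  proof (intro ballI, clarify)
    fix r i j assume r: "r \<in> R" and ij: "(i, j) \<in> U"
    have a1: "x r (i, j) \<in> {0, 1}" "x r (j, i) \<in> {0, 1}" using xdom r arcs_mem[OF ij] by auto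
    show "y' r (i, j) \<le> P * (x r (i, j) + x r (j, i))"
    proof (cases "y' r (i, j) > 0")
      case True
      then have "y r (i, j) > 0" using sub r ij by blast
      then have "P * (x r (i, j) + x r (j, i)) > 0" using iii r ij by fastforce
      then have "x r (i, j) + x r (j, i) \<ge> 1" using a1 P by auto
      then have "P * (x r (i, j) + x r (j, i)) \<ge> P" using P by simp
      then show ?thesis using leP[OF r ij] by linarith
    next
      case False
      then show ?thesis using a1 P by auto
    qed
  qed
  have v': "\<forall>r\<in>R. \<forall>S. S \<subseteq> scarp_vertices n \<and> 1 \<in> S \<longrightarrow>
        (let T = scarp_vertices n - S in
          (\<Sum>(i, j)\<in>{(i, j) \<in> scarp_arcs U. i \<in> S \<and> j \<in> T}. P * x r (i, j)) \<ge>
          (\<Sum>(i, j)\<in>{(i, j) \<in> U. i \<in> T \<and> j \<in> T}. y' r (i, j)))"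
  proof (intro ballI allI impI)
    fix r S assume r: "r \<in> R" and S: "S \<subseteq> scarp_vertices n \<and> 1 \<in> S"
    define T where "T = scarp_vertices n - S"
    define Cr where "Cr = {(i, j) \<in> scarp_arcs U. i \<in> S \<and> j \<in> T}"
    define In where "In = {(i, j) \<in> U. i \<in> T \<and> j \<in> T}"
    have CrA: "Cr \<subseteq> scarp_arcs U" by (auto simp: Cr_def)
    have fCr: "finite Cr" using arcs_fin[OF fU] CrA finite_subset by blast
    have InU: "In \<subseteq> U" by (auto simp: In_def)
    have fIn: "finite In" using fU InU finite_subset by blast
    have vr: "(\<Sum>a\<in>Cr. P * x r a) \<ge> (\<Sum>p\<in>In. y r p)"
      using v r S by (simp add: Let_def T_def Cr_def In_def case_prod_beta')
    have Lnn: "(\<Sum>a\<in>Cr. P * x r a) \<ge> 0"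
      by (rule sum_nonneg) (use xnn r CrA P in auto)
    have "(\<Sum>a\<in>Cr. P * x r a) \<ge> (\<Sum>p\<in>In. y' r p)"
    proof (cases "\<forall>p\<in>In. y r p = 0")
      case True
      have "\<forall>p\<in>In. y' r p = 0"
      proof
        fix p assume p: "p \<in> In"
        then have "\<not> y' r p > 0" using sub[OF r] InU True by fastforce
        moreover have "y' r p \<ge> 0" using nn[OF r] p InU by blast
        ultimately show "y' r p = 0" by linarith
      qed
      then show ?thesis using Lnn by simp
    next
      case False
      then obtain p where p: "p \<in> In" "y r p \<noteq> 0" by blast
      then have "y r p > 0" using ydom r InU by force
      then have "(\<Sum>p\<in>In. y r p) > 0"
        by (intro sum_pos2[OF fIn p(1)]) (use ydom r InU in auto)
      then have "(\<Sum>a\<in>Cr. P * x r a) \<noteq> 0" using vr by linarith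
      then obtain a where a: "a \<in> Cr" "P * x r a \<noteq> 0" by (meson sum.neutral)
      then have "x r a = 1" using xdom r CrA by auto
      then have "P \<le> (\<Sum>a\<in>Cr. P * x r a)"
        using member_le_sum[of a Cr "\<lambda>a. P * x r a"] a fCr xnn r CrA P by fastforce
      moreover have "(\<Sum>p\<in>In. y' r p) \<le> (\<Sum>e\<in>U. y' r e)"
        by (rule sum_mono2[OF fU InU]) (use nn r in auto)
      ultimately show ?thesis using cap'[OF r] by linarith
    qed
    then show "let T = scarp_vertices n - S in
          (\<Sum>(i, j)\<in>{(i, j) \<in> scarp_arcs U. i \<in> S \<and> j \<in> T}. P * x r (i, j)) \<ge>
          (\<Sum>(i, j)\<in>{(i, j) \<in> U. i \<in> T \<and> j \<in> T}. y' r (i, j))"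
      by (simp add: Let_def T_def Cr_def In_def case_prod_beta')
  qed
  have cap'': "\<forall>r\<in>R. (\<Sum>e\<in>U. y' r e) \<le> P" using cap' by blast
  have dem': "\<forall>e\<in>U. (\<Sum>r\<in>R. y' r e) = D e" using cols dem by simp
  show ?thesis unfolding scarp_feasible_def
    by (intro conjI) (fact xdom y'dom cap'' dem' iii' iv v')+
qed

theorem theorem1:
  fixes n :: nat and U :: "(nat \<times> nat) set" and C D :: "nat \<times> nat \<Rightarrow> real"
    and P :: real and R :: "'r set"
  assumes inst: "scarp_instance n U C D P R"
    and nonempty: "U \<noteq> {}"
    and has_opt: "\<exists>x y. scarp_optimal n U C D P R x y"
  shows "\<exists>x y. scarp_optimal n U C D P R x y \<and>
           card (R2plus U R y) < card U \<and>
           (\<forall>r \<in> R - R2plus U R y.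
              spray_support U y r = {} \<or> card (spray_support U y r) = 1)"
proof -
  have Usub: "U \<subseteq> {1..n} \<times> {1..n}" using inst by (auto simp: scarp_instance_def scarp_vertices_def)
  then have fU: "finite U" using finite_subset by blast
  have fR: "finite R" and P: "P > 0" using inst by (auto simp: scarp_instance_def)
  obtain x0 y0 where opt0: "scarp_optimal n U C D P R x0 y0" using has_opt by blast
  have feas0: "scarp_feasible n U D P R x0 y0" using opt0 by (simp add: scarp_optimal_def)
  define supp where "supp y = {p\<in>R \<times> U. y (fst p) (snd p) > 0}" for y :: "'r \<Rightarrow> nat \<times> nat \<Rightarrow> real"
  have fsupp: "finite (supp y)" for y using fR fU by (simp add: supp_def)
  obtain y where feasy: "scarp_feasible n U D P R x0 y"
    and minimal: "\<forall>y'. scarp_feasible n U D P R x0 y' \<longrightarrow> card (supp y) \<le> card (supp y')"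
    using ex_has_least_nat[of "\<lambda>y. scarp_feasible n U D P R x0 y" y0 "\<lambda>y. card (supp y)"] feas0 by blast
  have opt: "scarp_optimal n U C D P R x0 y" using opt0 feasy by (simp add: scarp_optimal_def)
  have ynn: "y r e \<ge> 0" if "r \<in> R" "e \<in> U" for r e
  proof -
    have "\<forall>r\<in>R. \<forall>e\<in>U. y r e \<ge> 0 \<and> (D e = 0 \<longrightarrow> y r e = 0)"
      using feasy[unfolded scarp_feasible_def, THEN conjunct2, THEN conjunct1] .
    then show ?thesis using that by blast
  qed
  have nocirc: "\<forall>p. lam p = 0"
    if lsupp: "\<forall>p. lam p \<noteq> 0 \<longrightarrow> p \<in> supp y" and lrows: "\<forall>r\<in>R. (\<Sum>e\<in>U. lam (r, e)) = 0"
      and lcols: "\<forall>e\<in>U. (\<Sum>r\<in>R. lam (r, e)) = (0::real)" for lam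
  proof (rule ccontr)
    assume nz: "\<not> (\<forall>p. lam p = 0)"
    obtain mu where msupp: "\<forall>p. mu p \<noteq> 0 \<longrightarrow> p \<in> supp y" and mrows: "\<forall>r\<in>R. (\<Sum>e\<in>U. mu (r, e)) = 0"
      and mcols: "\<forall>e\<in>U. (\<Sum>r\<in>R. mu (r, e)) = (0::real)" and mpos: "\<exists>p. mu p > 0"
    proof (cases "\<exists>p. lam p > 0")
      case True then show ?thesis using that lsupp lrows lcols by blast
    next
      case False
      then obtain p where "lam p < 0" using nz by (metis linorder_neqE_linordered_idom)
      then have "\<exists>p. (\<lambda>p. - lam p) p > 0" by (intro exI[of _ p]) simp
      moreover have "\<forall>p. (\<lambda>p. - lam p) p \<noteq> 0 \<longrightarrow> p \<in> supp y" using lsupp by simp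
      moreover have "\<forall>r\<in>R. (\<Sum>e\<in>U. (\<lambda>p. - lam p) (r, e)) = 0" using lrows by (simp add: sum_negf)
      moreover have "\<forall>e\<in>U. (\<Sum>r\<in>R. (\<lambda>p. - lam p) (r, e)) = 0" using lcols by (simp add: sum_negf)
      ultimately show ?thesis using that[of "\<lambda>p. - lam p"] by blast
    qed
    define Pos where "Pos = {p \<in> supp y. mu p > 0}"
    have fPos: "finite Pos" using fsupp by (simp add: Pos_def)
    have Posne: "Pos \<noteq> {}" using mpos msupp by (force simp: Pos_def)
    define rat where "rat p = y (fst p) (snd p) / mu p" for p
    define t where "t = Min (rat ` Pos)"
    have ratpos: "rat p > 0" if "p \<in> Pos" for p
      using that by (auto simp: Pos_def supp_def rat_def)
    have "t \<in> rat ` Pos" unfolding t_def using fPos Posne by (intro Min_in) auto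
    then obtain p0 where p0: "p0 \<in> Pos" "t = rat p0" by blast
    have tpos: "t > 0" using ratpos p0 by simp
    have tle: "t \<le> rat p" if "p \<in> Pos" for p using that fPos by (auto simp: t_def)
    define y' where "y' r e = y r e - t * mu (r, e)" for r e
    have nn': "y' r e \<ge> 0" if "r \<in> R" "e \<in> U" for r e
    proof (cases "mu (r, e) > 0")
      case True
      then have "mu (r, e) \<noteq> 0" by simp
      then have "(r, e) \<in> supp y" using msupp by blast
      then have "(r, e) \<in> Pos" using True by (simp add: Pos_def)
      then have "t \<le> y r e / mu (r, e)" using tle[of "(r, e)"] by (simp add: rat_def)
      then have "t * mu (r, e) \<le> y r e" using True by (simp add: le_divide_eq)
      then show ?thesis by (simp add: y'_def)
    next
      case False
      then have "t * mu (r, e) \<le> 0" using tpos by (simp add: mult_nonneg_nonpos)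
      then show ?thesis using ynn[OF that] by (simp add: y'_def)
    qed
    have sub': "y r e > 0" if "r \<in> R" "e \<in> U" "y' r e > 0" for r e
    proof (rule ccontr)
      assume "\<not> y r e > 0"
      then have "(r, e) \<notin> supp y" by (simp add: supp_def)
      then have "mu (r, e) = 0" using msupp by blast
      then show False using that \<open>\<not> y r e > 0\<close> by (simp add: y'_def)
    qed
    have rows': "(\<Sum>e\<in>U. y' r e) = (\<Sum>e\<in>U. y r e)" if "r \<in> R" for r
      using mrows that by (simp add: y'_def sum_subtractf sum_distrib_left[symmetric])
    have cols': "(\<Sum>r\<in>R. y' r e) = (\<Sum>r\<in>R. y r e)" if "e \<in> U" for e
      using mcols that by (simp add: y'_def sum_subtractf sum_distrib_left[symmetric])
    have feas': "scarp_feasible n U D P R x0 y'"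
      by (rule feas_transfer[OF feasy fU P nn' sub' rows' cols'])
    have "supp y' \<subseteq> supp y - {p0}"
    proof
      fix p assume p: "p \<in> supp y'"
      then have "p \<in> supp y" using sub' by (auto simp: supp_def)
      moreover have "p \<noteq> p0"
      proof
        assume "p = p0"
        have "mu p0 > 0" using p0 by (simp add: Pos_def)
        then have "y' (fst p0) (snd p0) = 0" using p0 by (simp add: y'_def rat_def)
        then show False using p \<open>p = p0\<close> by (simp add: supp_def)
      qed
      ultimately show "p \<in> supp y - {p0}" by simp
    qed
    moreover have "p0 \<in> supp y" using p0 by (simp add: Pos_def)
    ultimately have "supp y' \<subset> supp y" by blast
    then have "card (supp y') < card (supp y)" using fsupp by (intro psubset_card_mono)
    then show False using minimal feas' by force
  qed
  have SRU: "supp y \<subseteq> R \<times> U" by (auto simp: supp_def)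
  have eqss: "{e\<in>U. (r, e) \<in> supp y} = spray_support U y r" if "r \<in> R" for r
    using that by (auto simp: supp_def spray_support_def)
  have R2: "R2plus U R y = {r\<in>R. card {e\<in>U. (r, e) \<in> supp y} \<ge> 2}"
    using eqss by (auto simp: R2plus_def)
  have c: "card (R2plus U R y) < card U"
    unfolding R2 by (rule count_bound[OF fR fU SRU nonempty nocirc]) auto
  have rest: "\<forall>r \<in> R - R2plus U R y. spray_support U y r = {} \<or> card (spray_support U y r) = 1"
  proof
    fix r assume r: "r \<in> R - R2plus U R y"
    then have "card (spray_support U y r) < 2" by (auto simp: R2plus_def)
    moreover have "finite (spray_support U y r)" using fU by (simp add: spray_support_def)
    ultimately show "spray_support U y r = {} \<or> card (spray_support U y r) = 1"
      by (metis One_nat_def card_0_eq less_2_cases)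
  qed
  show ?thesis using opt c rest by blast
qed

end
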